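(* Let $\Omega\subset\mathbb{R}^n$ be a non-empty, bounded, connected, open set with closure $\overline{\Omega}$. Let $J\in C(\overline{\Omega}\times\overline{\Omega})$, let $S\in C^\infty(\mathbb{R})$ have bounded $k$th derivative for every $k\in\{0,1,2,\dots\}$, and let $\tau\in C(\overline{\Omega}\times\overline{\Omega})$ be non-negative and not identically zero. Put $h:=\sup_{\overline{\Omega}\times\overline{\Omega}}\tau$, $Y:=C(\overline{\Omega})$ with supremum norm and $X:=C([-h,0];Y)$ with supremum norm. Let $\alpha>0$ and define $F:X\to Y$ by $$F(\phi):=-\alpha\phi(0)+G(\phi),\qquad G(\phi)(\mathbf{r})=\int_{\overline{\Omega}}J(\mathbf{r},\mathbf{r}')S\big(\phi(-\tau(\mathbf{r},\mathbf{r}'),\mathbf{r}')\big)\,d\mathbf{r}'.$$ Then $F$ is globally Lipschitz continuous.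
   Context: For $\phi\in X$ one writes $\phi(t,\mathbf{r}):=\phi(t)(\mathbf{r})$. $G$ maps $X$ into $Y$. *)

theory Defs
  imports "HOL-Analysis.Analysis"
begin

definition smooth_bounded_derivs :: "(real \<Rightarrow> real) \<Rightarrow> bool" where
  "smooth_bounded_derivs S \<longleftrightarrow>
     (\<exists>Ds :: nat \<Rightarrow> real \<Rightarrow> real. Ds 0 = S \<and>
        (\<forall>k x. (Ds k has_real_derivative Ds (Suc k) x) (at x)) \<and>
        (\<forall>k. bounded (range (Ds k))))"

definition inY :: "'a::euclidean_space set \<Rightarrow> ('a \<Rightarrow> real) \<Rightarrow> bool" where
  "inY \<Omega> f \<longleftrightarrow> continuous_on (closure \<Omega>) f"

definition normY :: "'a::euclidean_space set \<Rightarrow> ('a \<Rightarrow> real) \<Rightarrow> real" where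
  "normY \<Omega> f = (SUP r\<in>closure \<Omega>. \<bar>f r\<bar>)"

definition inX :: "real \<Rightarrow> 'a::euclidean_space set \<Rightarrow> (real \<Rightarrow> 'a \<Rightarrow> real) \<Rightarrow> bool" where
  "inX h \<Omega> \<phi> \<longleftrightarrow> (\<forall>t\<in>{-h..0}. inY \<Omega> (\<phi> t)) \<and>
     (\<forall>t\<in>{-h..0}. \<forall>e>0. \<exists>d>0. \<forall>s\<in>{-h..0}. \<bar>s - t\<bar> < d \<longrightarrow>
         normY \<Omega> (\<lambda>r. \<phi> s r - \<phi> t r) < e)"

definition normX :: "real \<Rightarrow> 'a::euclidean_space set \<Rightarrow> (real \<Rightarrow> 'a \<Rightarrow> real) \<Rightarrow> real" where
  "normX h \<Omega> \<phi> = (SUP t\<in>{-h..0}. normY \<Omega> (\<phi> t))"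

definition Gop :: "'a::euclidean_space set \<Rightarrow> ('a \<Rightarrow> 'a \<Rightarrow> real) \<Rightarrow> (real \<Rightarrow> real)
    \<Rightarrow> ('a \<Rightarrow> 'a \<Rightarrow> real) \<Rightarrow> (real \<Rightarrow> 'a \<Rightarrow> real) \<Rightarrow> 'a \<Rightarrow> real" where
  "Gop \<Omega> J S \<tau> \<phi> r = integral (closure \<Omega>) (\<lambda>r'. J r r' * S (\<phi> (- \<tau> r r') r'))"

definition Fop :: "'a::euclidean_space set \<Rightarrow> real \<Rightarrow> ('a \<Rightarrow> 'a \<Rightarrow> real) \<Rightarrow> (real \<Rightarrow> real)
    \<Rightarrow> ('a \<Rightarrow> 'a \<Rightarrow> real) \<Rightarrow> (real \<Rightarrow> 'a \<Rightarrow> real) \<Rightarrow> 'a \<Rightarrow> real" where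
  "Fop \<Omega> \<alpha> J S \<tau> \<phi> r = - \<alpha> * \<phi> 0 r + Gop \<Omega> J S \<tau> \<phi> r"

end

theory Submission
  imports Defs
begin

lemma normY_upper:
  assumes "bounded \<Omega>" "continuous_on (closure \<Omega>) f" "r \<in> closure \<Omega>"
  shows "\<bar>f r\<bar> \<le> normY \<Omega> f"
proof -
  have "compact ((\<lambda>r. \<bar>f r\<bar>) ` closure \<Omega>)"
    by (intro compact_continuous_image continuous_intros assms) (simp add: assms compact_closure)
  hence "bdd_above ((\<lambda>r. \<bar>f r\<bar>) ` closure \<Omega>)" by (meson bounded_imp_bdd_above compact_imp_bounded)
  thus ?thesis unfolding normY_def by (rule cSUP_upper[OF assms(3)])
qed

lemma joint_cont:
  assumes "inX h \<Omega> \<phi>" "bounded \<Omega>"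
  shows "continuous_on ({-h..0} \<times> closure \<Omega>) (\<lambda>p. \<phi> (fst p) (snd p))"
  unfolding continuous_on_iff
proof (intro ballI allI impI)
  fix p and e :: real assume p: "p \<in> {-h..0} \<times> closure \<Omega>" and e: "0 < e"
  obtain t0 r0 where p_eq: "p = (t0,r0)" by (cases p)
  have t0: "t0 \<in> {-h..0}" and r0: "r0 \<in> closure \<Omega>" using p p_eq by auto
  have e2: "e/2 > 0" using e by simp
  from assms(1) t0 e2 obtain d1 where d1: "d1>0" "\<forall>s\<in>{-h..0}. \<bar>s - t0\<bar> < d1 \<longrightarrow> normY \<Omega> (\<lambda>r. \<phi> s r - \<phi> t0 r) < e/2"
    unfolding inX_def by blast
  have c0: "continuous_on (closure \<Omega>) (\<phi> t0)" using assms(1) t0 unfolding inX_def inY_def by auto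
  then obtain d2 where d2: "d2>0" "\<forall>r\<in>closure \<Omega>. dist r r0 < d2 \<longrightarrow> dist (\<phi> t0 r) (\<phi> t0 r0) < e/2"
    using r0 e2 unfolding continuous_on_iff by blast
  show "\<exists>d>0. \<forall>q\<in>{-h..0} \<times> closure \<Omega>. dist q p < d \<longrightarrow> dist (\<phi> (fst q) (snd q)) (\<phi> (fst p) (snd p)) < e"
  proof (intro exI[of _ "min d1 d2"] conjI ballI impI)
    show "0 < min d1 d2" using d1 d2 by simp
    fix q assume q: "q \<in> {-h..0} \<times> closure \<Omega>" and dq: "dist q p < min d1 d2"
    obtain s r where q_eq: "q = (s,r)" by (cases q)
    have s: "s \<in> {-h..0}" and r: "r \<in> closure \<Omega>" using q q_eq by auto
    have "dist s t0 < d1" using dist_fst_le[of q p] dq q_eq p_eq by auto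
    hence "\<bar>s - t0\<bar> < d1" by (simp add: dist_real_def)
    hence A: "normY \<Omega> (\<lambda>r. \<phi> s r - \<phi> t0 r) < e/2" using d1 s by auto
    have cs: "continuous_on (closure \<Omega>) (\<phi> s)" using assms(1) s unfolding inX_def inY_def by auto
    have "\<bar>\<phi> s r - \<phi> t0 r\<bar> \<le> normY \<Omega> (\<lambda>r. \<phi> s r - \<phi> t0 r)"
      by (rule normY_upper[OF assms(2) continuous_on_diff[OF cs c0] r])
    moreover have "dist r r0 < d2" using dist_snd_le[of q p] dq q_eq p_eq by auto
    hence "dist (\<phi> t0 r) (\<phi> t0 r0) < e/2" using d2 r by auto
    ultimately show "dist (\<phi> (fst q) (snd q)) (\<phi> (fst p) (snd p)) < e"
      using A q_eq p_eq abs_triangle_ineq[of "\<phi> s r - \<phi> t0 r" "\<phi> t0 r - \<phi> t0 r0"]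
      by (simp add: dist_real_def)
  qed
qed

lemma S_lip:
  assumes "smooth_bounded_derivs S"
  shows "\<exists>M\<ge>0. \<forall>x y. \<bar>S x - S y\<bar> \<le> M * \<bar>x - y\<bar>"
proof -
  obtain Ds where D0: "Ds 0 = S" and D: "\<And>k x. (Ds k has_real_derivative Ds (Suc k) x) (at x)"
    and B: "bounded (range (Ds (Suc 0)))"
    using assms unfolding smooth_bounded_derivs_def by blast
  obtain M where M: "\<And>x. \<bar>Ds (Suc 0) x\<bar> \<le> M" using B unfolding bounded_iff by auto
  have M0: "0 \<le> M" using M[of 0] by linarith
  have DS: "\<And>x. (S has_real_derivative Ds (Suc 0) x) (at x)" using D[of 0] D0 by metis
  have key: "\<bar>S b - S a\<bar> \<le> M * \<bar>b - a\<bar>" if ab: "a < b" for a b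
  proof -
    obtain z where "S b - S a = (b - a) * Ds (Suc 0) z"
      using MVT2[OF ab, of S "Ds (Suc 0)"] DS by blast
    hence "\<bar>S b - S a\<bar> = \<bar>b - a\<bar> * \<bar>Ds (Suc 0) z\<bar>" by (simp add: abs_mult)
    also have "\<dots> \<le> \<bar>b - a\<bar> * M" by (rule mult_left_mono[OF M]) simp
    finally show ?thesis by (simp add: mult.commute)
  qed
  have "\<forall>x y. \<bar>S x - S y\<bar> \<le> M * \<bar>x - y\<bar>"
  proof (intro allI)
    fix x y :: real
    consider "x < y" | "x = y" | "y < x" by linarith
    thus "\<bar>S x - S y\<bar> \<le> M * \<bar>x - y\<bar>"
      using key[of x y] key[of y x] by cases (auto simp: abs_minus_commute)
  qed
  thus ?thesis using M0 by blast
qed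

lemma S_cont:
  assumes "smooth_bounded_derivs S"
  shows "continuous_on UNIV S"
proof -
  obtain Ds where D0: "Ds 0 = S" and D: "\<And>k x. (Ds k has_real_derivative Ds (Suc k) x) (at x)"
    using assms unfolding smooth_bounded_derivs_def by blast
  have "\<And>x. isCont S x" using DERIV_isCont D[of 0] D0 by metis
  thus ?thesis by (simp add: continuous_at_imp_continuous_on)
qed

lemma cont_integrable:
  fixes f :: "'a::euclidean_space \<Rightarrow> real"
  assumes "compact K" "continuous_on K f"
  shows "f integrable_on K"
proof -
  obtain B where B: "\<And>x. x \<in> K \<Longrightarrow> norm (f x) \<le> B"
    using compact_imp_bounded[OF compact_continuous_image[OF assms(2,1)]] unfolding bounded_iff by auto
  have L: "K \<in> sets lebesgue" using lmeasurable_compact[OF assms(1)] by (simp add: fmeasurableD)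
  have "f absolutely_integrable_on K"
    by (rule measurable_bounded_by_integrable_imp_absolutely_integrable[OF
          continuous_imp_measurable_on_sets_lebesgue[OF assms(2) L] L
          integrable_on_const[OF lmeasurable_compact[OF assms(1)]] B])
  thus ?thesis using absolutely_integrable_on_def by blast
qed

theorem lemma2p3:
  fixes \<Omega> :: "'a::euclidean_space set"
    and J \<tau> :: "'a \<Rightarrow> 'a \<Rightarrow> real" and S :: "real \<Rightarrow> real"
    and \<alpha> h :: real
  assumes "\<Omega> \<noteq> {}" and "bounded \<Omega>" and "connected \<Omega>" and "open \<Omega>"
    and "continuous_on (closure \<Omega> \<times> closure \<Omega>) (\<lambda>(r, r'). J r r')"
    and "smooth_bounded_derivs S"
    and "continuous_on (closure \<Omega> \<times> closure \<Omega>) (\<lambda>(r, r'). \<tau> r r')"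
    and "\<forall>r\<in>closure \<Omega>. \<forall>r'\<in>closure \<Omega>. 0 \<le> \<tau> r r'"
    and "\<exists>r\<in>closure \<Omega>. \<exists>r'\<in>closure \<Omega>. \<tau> r r' \<noteq> 0"
    and "h = (SUP p\<in>closure \<Omega> \<times> closure \<Omega>. \<tau> (fst p) (snd p))"
    and "\<alpha> > 0"
  shows "\<exists>L. \<forall>\<phi> \<psi>. inX h \<Omega> \<phi> \<longrightarrow> inX h \<Omega> \<psi> \<longrightarrow>
           normY \<Omega> (\<lambda>r. Fop \<Omega> \<alpha> J S \<tau> \<phi> r - Fop \<Omega> \<alpha> J S \<tau> \<psi> r)
             \<le> L * normX h \<Omega> (\<lambda>t r. \<phi> t r - \<psi> t r)"
proof -
  define K where "K = closure \<Omega>"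
  have cK: "compact K" using assms(2) by (simp add: K_def compact_closure)
  have neK: "K \<noteq> {}" using assms(1) by (simp add: K_def)
  have tauc: "continuous_on (K \<times> K) (\<lambda>p. \<tau> (fst p) (snd p))"
    using assms(7) by (simp add: K_def case_prod_unfold)
  have Jc: "continuous_on (K \<times> K) (\<lambda>p. J (fst p) (snd p))"
    using assms(5) by (simp add: K_def case_prod_unfold)
  have "bdd_above ((\<lambda>p. \<tau> (fst p) (snd p)) ` (K \<times> K))"
    by (rule bounded_imp_bdd_above[OF compact_imp_bounded[OF compact_continuous_image[OF tauc compact_Times[OF cK cK]]]])
  hence tauh: "\<tau> r r' \<le> h" if "r \<in> K" "r' \<in> K" for r r'
    using cSUP_upper[of "(r,r')" "K \<times> K" "\<lambda>p. \<tau> (fst p) (snd p)"] that assms(10) by (simp add: K_def)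
  have tau0: "0 \<le> \<tau> r r'" if "r \<in> K" "r' \<in> K" for r r'
    using assms(8) that by (simp add: K_def)
  have h0: "0 \<le> h" using assms(9) tauh tau0 unfolding K_def by force
  have "\<exists>MJ. \<forall>p\<in>K \<times> K. norm (J (fst p) (snd p)) \<le> MJ"
    using compact_imp_bounded[OF compact_continuous_image[OF Jc compact_Times[OF cK cK]]]
    unfolding bounded_iff by auto
  then obtain MJ where MJ: "\<forall>p\<in>K \<times> K. norm (J (fst p) (snd p)) \<le> MJ" by blast
  have MJ': "\<bar>J r r'\<bar> \<le> MJ" if "r \<in> K" "r' \<in> K" for r r' using MJ that by force
  have MJ0: "0 \<le> MJ" using MJ' neK by force
  obtain M where M0: "M \<ge> 0" and M: "\<And>x y. \<bar>S x - S y\<bar> \<le> M * \<bar>x - y\<bar>"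
    using S_lip[OF assms(6)] by blast
  define C where "C = integral K (\<lambda>_. MJ * M)"
  show ?thesis
  proof (intro exI[of _ "\<alpha> + C"] allI impI)
    fix \<phi> \<psi> assume \<phi>: "inX h \<Omega> \<phi>" and \<psi>: "inX h \<Omega> \<psi>"
    define N where "N = normX h \<Omega> (\<lambda>t r. \<phi> t r - \<psi> t r)"
    have j\<phi>: "continuous_on ({-h..0} \<times> K) (\<lambda>p. \<phi> (fst p) (snd p))"
      using joint_cont[OF \<phi> assms(2)] by (simp add: K_def)
    have j\<psi>: "continuous_on ({-h..0} \<times> K) (\<lambda>p. \<psi> (fst p) (snd p))"
      using joint_cont[OF \<psi> assms(2)] by (simp add: K_def)
    have "\<exists>B. \<forall>p\<in>{-h..0} \<times> K. norm (\<phi> (fst p) (snd p) - \<psi> (fst p) (snd p)) \<le> B"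
      using compact_imp_bounded[OF compact_continuous_image[OF continuous_on_diff[OF j\<phi> j\<psi>]
          compact_Times[OF compact_Icc cK]]]
      unfolding bounded_iff by auto
    then obtain B where B0: "\<forall>p\<in>{-h..0} \<times> K. norm (\<phi> (fst p) (snd p) - \<psi> (fst p) (snd p)) \<le> B" by blast
    have B: "\<bar>\<phi> t r - \<psi> t r\<bar> \<le> B" if "t \<in> {-h..0}" "r \<in> K" for t r using B0 that by force
    have nYB: "normY \<Omega> (\<lambda>r. \<phi> t r - \<psi> t r) \<le> B" if "t \<in> {-h..0}" for t
      unfolding normY_def using neK B that
      by (intro cSUP_least) (auto simp: K_def)
    have pw: "\<bar>\<phi> t r - \<psi> t r\<bar> \<le> N" if t: "t \<in> {-h..0}" and r: "r \<in> K" for t r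
    proof -
      have c1: "continuous_on (closure \<Omega>) (\<lambda>r. \<phi> t r - \<psi> t r)"
        using \<phi> \<psi> t unfolding inX_def inY_def by (auto intro: continuous_on_diff)
      have "\<bar>\<phi> t r - \<psi> t r\<bar> \<le> normY \<Omega> (\<lambda>r. \<phi> t r - \<psi> t r)"
        using normY_upper[OF assms(2) c1] r by (simp add: K_def)
      also have "\<dots> \<le> N" unfolding N_def normX_def
        by (rule cSUP_upper[OF t]) (use nYB in \<open>auto intro!: bdd_aboveI2[where M=B]\<close>)
      finally show ?thesis .
    qed
    have N0: "0 \<le> N" using pw[of 0] h0 neK by force
    have pt: "\<bar>Fop \<Omega> \<alpha> J S \<tau> \<phi> r - Fop \<Omega> \<alpha> J S \<tau> \<psi> r\<bar> \<le> (\<alpha> + C) * N" if r: "r \<in> K" for r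
    proof -
      have pr: "continuous_on K (\<lambda>r'. (r, r'))" by (intro continuous_intros)
      have prI: "(\<lambda>r'. (r, r')) ` K \<subseteq> K \<times> K" using r by auto
      have tr: "continuous_on K (\<lambda>r'. \<tau> r r')"
        using continuous_on_compose2[OF tauc pr prI] by simp
      have Jr: "continuous_on K (\<lambda>r'. J r r')"
        using continuous_on_compose2[OF Jc pr prI] by simp
      have img: "(\<lambda>r'. (- \<tau> r r', r')) ` K \<subseteq> {-h..0} \<times> K"
        using tauh[OF r] tau0[OF r] by auto
      have gc: "continuous_on K (\<lambda>r'. (- \<tau> r r', r'))"
        by (intro continuous_intros tr)
      have c\<phi>: "continuous_on K (\<lambda>r'. \<phi> (- \<tau> r r') r')"
        using continuous_on_compose2[OF j\<phi> gc img] by simp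
      have c\<psi>: "continuous_on K (\<lambda>r'. \<psi> (- \<tau> r r') r')"
        using continuous_on_compose2[OF j\<psi> gc img] by simp
      have Sc: "continuous_on UNIV S"
        using S_cont[OF assms(6)] .
      have f: "(\<lambda>r'. J r r' * S (\<phi> (- \<tau> r r') r')) integrable_on K"
        by (intro cont_integrable cK continuous_intros Jr continuous_on_compose2[OF Sc c\<phi>]) auto
      have g: "(\<lambda>r'. J r r' * S (\<psi> (- \<tau> r r') r')) integrable_on K"
        by (intro cont_integrable cK continuous_intros Jr continuous_on_compose2[OF Sc c\<psi>]) auto
      have G: "\<bar>Gop \<Omega> J S \<tau> \<phi> r - Gop \<Omega> J S \<tau> \<psi> r\<bar> \<le> C * N"
      proof -
        have "Gop \<Omega> J S \<tau> \<phi> r - Gop \<Omega> J S \<tau> \<psi> r =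
          integral K (\<lambda>r'. J r r' * S (\<phi> (- \<tau> r r') r') - J r r' * S (\<psi> (- \<tau> r r') r'))"
          unfolding Gop_def K_def[symmetric] by (rule integral_diff[OF f g, symmetric])
        also have "\<bar>\<dots>\<bar> \<le> integral K (\<lambda>_. MJ * M * N)"
        proof -
          have "norm (integral K (\<lambda>r'. J r r' * S (\<phi> (- \<tau> r r') r') - J r r' * S (\<psi> (- \<tau> r r') r')))
               \<le> integral K (\<lambda>_. MJ * M * N)"
          proof (rule integral_norm_bound_integral[OF integrable_diff[OF f g]])
            show "(\<lambda>_. MJ * M * N) integrable_on K"
              by (rule integrable_on_const[OF lmeasurable_compact[OF cK]])
            fix x assume x: "x \<in> K"
            have tx: "- \<tau> r x \<in> {-h..0}" using tauh[OF r x] tau0[OF r x] by auto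
            have "norm (J r x * S (\<phi> (- \<tau> r x) x) - J r x * S (\<psi> (- \<tau> r x) x))
                = \<bar>J r x\<bar> * \<bar>S (\<phi> (- \<tau> r x) x) - S (\<psi> (- \<tau> r x) x)\<bar>"
              by (simp add: abs_mult right_diff_distrib[symmetric])
            also have "\<dots> \<le> MJ * (M * N)"
            proof (rule mult_mono)
              show "\<bar>J r x\<bar> \<le> MJ" by (rule MJ'[OF r x])
              have "\<bar>S (\<phi> (- \<tau> r x) x) - S (\<psi> (- \<tau> r x) x)\<bar> \<le> M * \<bar>\<phi> (- \<tau> r x) x - \<psi> (- \<tau> r x) x\<bar>"
                by (rule M)
              also have "\<dots> \<le> M * N" by (rule mult_left_mono[OF pw[OF tx x] M0])
              finally show "\<bar>S (\<phi> (- \<tau> r x) x) - S (\<psi> (- \<tau> r x) x)\<bar> \<le> M * N" .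
            qed (use MJ0 in auto)
            finally show "norm (J r x * S (\<phi> (- \<tau> r x) x) - J r x * S (\<psi> (- \<tau> r x) x)) \<le> MJ * M * N"
              by (simp add: mult.assoc)
          qed
          thus ?thesis by simp
        qed
        also have "integral K (\<lambda>_. MJ * M * N) = C * N"
          unfolding C_def by (rule integral_mult_left)
        finally show ?thesis .
      qed
      have A: "\<bar>\<phi> 0 r - \<psi> 0 r\<bar> \<le> N" using pw[OF _ r] h0 by auto
      have "\<bar>Fop \<Omega> \<alpha> J S \<tau> \<phi> r - Fop \<Omega> \<alpha> J S \<tau> \<psi> r\<bar>
          = \<bar>- \<alpha> * (\<phi> 0 r - \<psi> 0 r) + (Gop \<Omega> J S \<tau> \<phi> r - Gop \<Omega> J S \<tau> \<psi> r)\<bar>"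
        unfolding Fop_def by (simp add: algebra_simps)
      also have "\<dots> \<le> \<alpha> * \<bar>\<phi> 0 r - \<psi> 0 r\<bar> + \<bar>Gop \<Omega> J S \<tau> \<phi> r - Gop \<Omega> J S \<tau> \<psi> r\<bar>"
        using assms(11) abs_triangle_ineq[of "- \<alpha> * (\<phi> 0 r - \<psi> 0 r)" "Gop \<Omega> J S \<tau> \<phi> r - Gop \<Omega> J S \<tau> \<psi> r"]
        by (simp add: abs_mult)
      also have "\<dots> \<le> \<alpha> * N + C * N"
        using A G assms(11) by (intro add_mono mult_left_mono) auto
      finally show ?thesis by (simp add: algebra_simps)
    qed
    show "normY \<Omega> (\<lambda>r. Fop \<Omega> \<alpha> J S \<tau> \<phi> r - Fop \<Omega> \<alpha> J S \<tau> \<psi> r) \<le> (\<alpha> + C) * N"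
      unfolding normY_def using neK pt by (intro cSUP_least) (auto simp: K_def)
  qed
qed

end
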